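(* Let $\mathcal{M}=\langle M,\circ,e\rangle$ be an mge monoid and let $m,n\in M$ be such that the equation $mx=n$ has a solution $x\in M$. Then the solution is unique, and if $\langle x_1,x_2\rangle$ is an mge of $\langle m,n\rangle$ then $x_2$ is invertible and $x=x_1x_2^{-1}$.
   Context: In a monoid $\langle M,\circ,e\rangle$, a tuple $\langle m_1,\dots,m_n\rangle\in M^n$ is equalizable if there is $\langle x_1,\dots,x_n\rangle\in M^n$ (an equalizer) with $m_1x_1=\dots=m_nx_n$; an equalizer is a most general equalizer (mge) if every equalizer has the form $\langle x_1x,\dots,x_nx\rangle$ for some $x\in M$. An mge monoid is a monoid with right cancellation ($ac=bc\Rightarrow a=b$) in which every equalizable pair has an mge. An element $m$ is invertible if $mn=e$ for some $n\in M$; this $n$ is unique and denoted $m^{-1}$. *)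

theory Defs
  imports Main
begin

text \<open>Monoids are modelled by the type class monoid_mult (operation *, unit 1).
  Equalizers / mges are defined for pairs, the only tuples needed here.\<close>

definition is_equalizer :: "'a::monoid_mult \<Rightarrow> 'a \<Rightarrow> 'a \<Rightarrow> 'a \<Rightarrow> bool" where
  "is_equalizer m1 m2 x1 x2 \<longleftrightarrow> m1 * x1 = m2 * x2"

definition equalizable :: "'a::monoid_mult \<Rightarrow> 'a \<Rightarrow> bool" where
  "equalizable m1 m2 \<longleftrightarrow> (\<exists>x1 x2. is_equalizer m1 m2 x1 x2)"

definition is_mge :: "'a::monoid_mult \<Rightarrow> 'a \<Rightarrow> 'a \<Rightarrow> 'a \<Rightarrow> bool" where
  "is_mge m1 m2 x1 x2 \<longleftrightarrow> is_equalizer m1 m2 x1 x2 \<and>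
     (\<forall>y1 y2. is_equalizer m1 m2 y1 y2 \<longrightarrow> (\<exists>x. y1 = x1 * x \<and> y2 = x2 * x))"

definition right_cancellative :: "'a::monoid_mult itself \<Rightarrow> bool" where
  "right_cancellative _ \<longleftrightarrow> (\<forall>a b c :: 'a. a * c = b * c \<longrightarrow> a = b)"

definition mge_monoid :: "'a::monoid_mult itself \<Rightarrow> bool" where
  "mge_monoid T \<longleftrightarrow> right_cancellative T \<and>
     (\<forall>m1 m2 :: 'a. equalizable m1 m2 \<longrightarrow> (\<exists>x1 x2. is_mge m1 m2 x1 x2))"

definition invertible :: "'a::monoid_mult \<Rightarrow> bool" where
  "invertible m \<longleftrightarrow> (\<exists>n. m * n = 1)"

definition minv :: "'a::monoid_mult \<Rightarrow> 'a" where
  "minv m = (THE n. m * n = 1)"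

end

theory Submission
  imports Defs
begin

theorem lemma4:
  fixes m n x :: "'a::monoid_mult"
  assumes "mge_monoid TYPE('a)"
    and "m * x = n"
  shows "(\<forall>y. m * y = n \<longrightarrow> y = x) \<and>
         (\<forall>x1 x2. is_mge m n x1 x2 \<longrightarrow> invertible x2 \<and> x = x1 * minv x2)"
proof -
  have rc: "\<And>a b c::'a. a * c = b * c \<Longrightarrow> a = b"
    using assms(1) unfolding mge_monoid_def right_cancellative_def by blast
  have key: "invertible x2 \<and> x = x1 * minv x2 \<and> (\<forall>y. m * y = n \<longrightarrow> y = x)"
    if mg: "is_mge m n x1 x2" for x1 x2
  proof -
    have eq: "\<exists>c. y = x1 * c \<and> x2 * c = 1" if "m * y = n" for y
    proof -
      have "is_equalizer m n y 1" unfolding is_equalizer_def using that by simp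
      then show ?thesis using mg unfolding is_mge_def by (metis mult_1_right)
    qed
    obtain a where a: "x = x1 * a" "x2 * a = 1" using eq[OF assms(2)] by blast
    have ax: "a * x2 = 1"
    proof -
      have "a * x2 * a = a * (x2 * a)" by (rule mult.assoc)
      also have "\<dots> = 1 * a" using a(2) by simp
      finally show ?thesis by (rule rc)
    qed
    have uniq: "b = a" if "x2 * b = 1" for b
    proof -
      have "b = (a * x2) * b" using ax by simp
      also have "\<dots> = a * (x2 * b)" by (rule mult.assoc)
      also have "\<dots> = a" using that by simp
      finally show ?thesis .
    qed
    have "minv x2 = a" unfolding minv_def
      by (rule the_equality[where P="\<lambda>n. x2 * n = 1", OF a(2) uniq])
    moreover have "\<forall>y. m * y = n \<longrightarrow> y = x"
    proof (intro allI impI)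
      fix y assume "m * y = n"
      then obtain c where "y = x1 * c" "x2 * c = 1" using eq by blast
      then show "y = x" using uniq[of c] a(1) by simp
    qed
    ultimately show ?thesis using a unfolding invertible_def by blast
  qed
  have "equalizable m n" unfolding equalizable_def is_equalizer_def
    using assms(2) by (intro exI[of _ x] exI[of _ 1]) simp
  then obtain x1 x2 where "is_mge m n x1 x2"
    using assms(1) unfolding mge_monoid_def by blast
  then show ?thesis using key by blast
qed

end
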